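(* Let $H=\{\underline z\in\mathbb{C}^3: z_1+z_2+z_3=0\}$ and $p(Z)=Z^3$. If $\underline z\in H$ is not a complex scalar multiple of a vector with real entries, then $W_p^{\circ n}(\underline z)$ is defined for all $n\ge0$ and converges to the zero vector; the convergence is linear with rate $2/3$, i.e. $W_p^{\circ n}(\underline z)\neq 0$ for all $n$ and $\|W_p^{\circ(n+1)}(\underline z)\|/\|W_p^{\circ n}(\underline z)\|\to 2/3$ (for any norm on $\mathbb{C}^3$).
   Context: For a monic polynomial $p\in\mathbb{C}[Z]$ of degree $d$, the Weierstrass map $W_p$ is the partially defined map $\mathbb{C}^d\setminus\Delta\to\mathbb{C}^d$, $\underline z\mapsto \underline z'$ with $z'_k=z_k-\dfrac{p(z_k)}{\prod_{j\ne k}(z_k-z_j)}$, where $\Delta=\{\underline z\in\mathbb{C}^d: z_j=z_k\text{ for some }j<k\}$. *)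

theory Defs
  imports "HOL-Analysis.Analysis" "HOL-Computational_Algebra.Polynomial"
begin

definition diag_set :: "(complex ^ 'n) set" where
  "diag_set = {z. \<exists>j k. j \<noteq> k \<and> z $ j = z $ k}"

text \<open>Weierstrass map of p (meaningful off diag_set; total in HOL via x / 0 = 0).\<close>
definition weierstrass_map :: "complex poly \<Rightarrow> complex ^ 'n \<Rightarrow> complex ^ 'n" where
  "weierstrass_map p z =
     (\<chi> k. z $ k - poly p (z $ k) / (\<Prod>j\<in>UNIV - {k}. (z $ k - z $ j)))"

definition is_complex_norm :: "(complex ^ 'n \<Rightarrow> real) \<Rightarrow> bool" where
  "is_complex_norm N \<longleftrightarrow>
     (\<forall>x. 0 \<le> N x) \<and> (\<forall>x. N x = 0 \<longleftrightarrow> x = 0) \<and>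
     (\<forall>c x. N (c *s x) = cmod c * N x) \<and> (\<forall>x y. N (x + y) \<le> N x + N y)"

end

theory Submission
  imports Defs
begin


definition ww :: complex where "ww = Complex (-1/2) (sqrt 3 / 2)"

lemma ww_rel: "ww^2 + ww + 1 = 0"
  by (simp add: ww_def complex_eq_iff power2_eq_square)

lemma ww3: "ww^3 = 1"
proof -
  have "ww^3 - 1 = (ww - 1) * (ww^2 + ww + 1)" by algebra
  then show ?thesis using ww_rel by simp
qed

lemma cnj_ww: "cnj ww = ww^2"
  by (simp add: ww_def complex_eq_iff power2_eq_square)

lemma denom: "(a+b - (a * ww+b * ww^2)) * (a+b-(a * ww^2+b * ww)) = 3 * (a^2+a * b+b^2)"
  using ww_rel by algebra

lemma L:
  fixes a b :: complex
  assumes "a^3 - b^3 \<noteq> 0"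
  shows "(a+b) - (a+b)^3/((a+b - (a * ww+b * ww^2)) * (a+b-(a * ww^2+b * ww)))
     = a * (2 * a^3-b^3)/(3 * (a^3-b^3)) + b * (a^3-2 * b^3)/(3 * (a^3-b^3))"
proof -
  have f: "a^3-b^3 = (a-b) * (a^2+a * b+b^2)" by algebra
  have D: "a^2+a * b+b^2 \<noteq> 0" using assms f by auto
  have ab: "a - b \<noteq> 0" using assms f by auto
  have E: "3 * (a^3-b^3) \<noteq> 0" using assms by simp
  have 1: "(a+b)^3/(3 * (a^2+a * b+b^2)) = (a+b)^3 * (a-b)/(3 * (a^3-b^3))"
    unfolding f using ab by simp
  have 2: "a * (2 * a^3-b^3)/(3 * (a^3-b^3)) + b * (a^3-2 * b^3)/(3 * (a^3-b^3))
     = (a * (2 * a^3-b^3) + b * (a^3-2 * b^3))/(3 * (a^3-b^3))"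
    by (simp add: add_divide_distrib)
  have 3: "(a+b) - (a+b)^3 * (a-b)/(3 * (a^3-b^3)) = ((a+b) * (3 * (a^3-b^3)) - (a+b)^3 * (a-b))/(3 * (a^3-b^3))"
    using E by (simp add: diff_divide_distrib)
  have 4: "(a+b) * (3 * (a^3-b^3)) - (a+b)^3 * (a-b) = a * (2 * a^3-b^3) + b * (a^3-2 * b^3)"
    by algebra
  show ?thesis unfolding denom 1 2 3 4 ..
qed

lemma comp:
  assumes "a^3 = u^3" "b^3 = v^3" "u^3 \<noteq> v^3" "x = a+b" "y = a * ww+b * ww^2" "y' = a * ww^2+b * ww"
  shows "x - x^3/((x-y) * (x-y')) = a * (2 * u^3-v^3)/(3 * (u^3-v^3)) + b * (u^3-2 * v^3)/(3 * (u^3-v^3))"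
  using L[of a b] assms by simp

definition Zv :: "complex \<Rightarrow> complex \<Rightarrow> complex^3" where
  "Zv u v = vector [u * ww + v * ww^2, u * ww^2 + v * ww, u+v]"

lemma Zv_nth [simp]: "Zv u v $ 1 = u * ww + v * ww^2" "Zv u v $ 2 = u * ww^2 + v * ww" "Zv u v $ 3 = u+v"
  by (simp_all add: Zv_def)

definition ff :: "complex \<Rightarrow> complex \<Rightarrow> complex" where
  "ff u v = u * (2 * u^3-v^3)/(3 * (u^3-v^3))"

lemma ff_swap: "ff v u = v * (u^3-2 * v^3)/(3 * (u^3-v^3))"
proof -
  have "v * (2 * v^3-u^3) = - (v * (u^3-2 * v^3))" "3 * (v^3-u^3) = - (3 * (u^3-v^3))" by algebra+
  then show ?thesis unfolding ff_def by (metis minus_divide_divide)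
qed

lemma poly3: "poly [:0,0,0,1:] x = x^3"
  by (simp add: eval_nat_numeral)

lemma W_Zv:
  assumes uv: "u^3 \<noteq> v^3"
  shows "weierstrass_map [:0,0,0,1:] (Zv u v) = Zv (ff u v) (ff v u)"
proof -
  have e0: "(1::3) \<noteq> 2" "(1::3) \<noteq> 3" "(2::3) \<noteq> 3" by simp_all
  have e1: "UNIV - {1::3} = {2,3}" "UNIV - {2::3} = {1,3}" "UNIV - {3::3} = {1,2}"
    using exhaust_3 e0 e0[symmetric] by blast+
  have r: "ff u v * ww + ff v u * ww^2 = (u * ww) * (2 * u^3-v^3)/(3 * (u^3-v^3)) + (v * ww^2) * (u^3-2 * v^3)/(3 * (u^3-v^3))"
     "ff u v * ww^2 + ff v u * ww = (u * ww^2) * (2 * u^3-v^3)/(3 * (u^3-v^3)) + (v * ww) * (u^3-2 * v^3)/(3 * (u^3-v^3))"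
     "ff u v + ff v u = u * (2 * u^3-v^3)/(3 * (u^3-v^3)) + v * (u^3-2 * v^3)/(3 * (u^3-v^3))"
    unfolding ff_swap[of v u] ff_def[of u v] by (simp_all add: ac_simps)
  have c1: "Zv u v $ 1 - (Zv u v $ 1)^3/((Zv u v $ 1 - Zv u v $ 2) * (Zv u v $ 1 - Zv u v $ 3)) = ff u v * ww + ff v u * ww^2"
    unfolding r(1) Zv_nth
    apply (rule comp)
    apply (rule refl | use ww3 in algebra)
    apply (rule refl | use ww3 in algebra)
    apply (rule uv)
    apply (rule refl | use ww3 in algebra)+
    done
  have c2: "Zv u v $ 2 - (Zv u v $ 2)^3/((Zv u v $ 2 - Zv u v $ 3) * (Zv u v $ 2 - Zv u v $ 1)) = ff u v * ww^2 + ff v u * ww"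
    unfolding r(2) Zv_nth
    apply (rule comp)
    apply (rule refl | use ww3 in algebra)
    apply (rule refl | use ww3 in algebra)
    apply (rule uv)
    apply (rule refl | use ww3 in algebra)+
    done
  have c3: "Zv u v $ 3 - (Zv u v $ 3)^3/((Zv u v $ 3 - Zv u v $ 1) * (Zv u v $ 3 - Zv u v $ 2)) = ff u v + ff v u"
    unfolding r(3) Zv_nth
    apply (rule comp)
    apply (rule refl | use ww3 in algebra)
    apply (rule refl | use ww3 in algebra)
    apply (rule uv)
    apply (rule refl | use ww3 in algebra)+
    done
  have c2': "Zv u v $ 2 - (Zv u v $ 2)^3/((Zv u v $ 2 - Zv u v $ 1) * (Zv u v $ 2 - Zv u v $ 3)) = ff u v * ww^2 + ff v u * ww"
    using c2 by (simp only: mult.commute)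
  show ?thesis
    unfolding vec_eq_iff forall_3 weierstrass_map_def vec_lambda_beta e1 poly3
    using c1 c2' c3 by (simp add: e0 del: Zv_nth) simp
qed

lemma disc: "((Zv u v$1 - Zv u v$2) * (Zv u v$1 - Zv u v$3) * (Zv u v$2 - Zv u v$3))^2 = -27 * (u^3-v^3)^2"
  unfolding Zv_nth using ww_rel by algebra

lemma nondiag:
  assumes "u^3 \<noteq> v^3" shows "Zv u v \<notin> diag_set"
proof -
  have "(u^3-v^3)^2 \<noteq> 0" using assms by simp
  then have "((Zv u v$1 - Zv u v$2) * (Zv u v$1 - Zv u v$3) * (Zv u v$2 - Zv u v$3)) \<noteq> 0"
    using disc[of u v] by auto
  then have nz: "Zv u v$1 \<noteq> Zv u v$2" "Zv u v$1 \<noteq> Zv u v$3" "Zv u v$2 \<noteq> Zv u v$3"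
    by auto
  show ?thesis
  proof
    assume "Zv u v \<in> diag_set"
    then obtain j k where "j \<noteq> k" "Zv u v $ j = Zv u v $ k" unfolding diag_set_def by blast
    then show False using nz exhaust_3[of j] exhaust_3[of k] by metis
  qed
qed

lemma cube_ne: "cmod u \<noteq> cmod v \<Longrightarrow> u^3 \<noteq> v^3"
proof
  assume "cmod u \<noteq> cmod v" "u^3 = v^3"
  then have "cmod u ^ 3 = cmod v ^ 3" by (metis norm_power)
  then have "cmod u = cmod v" by (rule power_eq_imp_eq_base) auto
  then show False using \<open>cmod u \<noteq> cmod v\<close> by simp
qed

lemma Zv_repr:
  fixes z :: "complex^3"
  assumes "z $ 1 + z $ 2 + z $ 3 = 0"
  shows "z = Zv ((z$1 * ww^2 + z$2 * ww + z$3)/3) ((z$1 * ww + z$2 * ww^2 + z$3)/3)"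
proof -
  have h: "z$3 = - z$1 - z$2" using assms by (simp add: eq_neg_iff_add_eq_0 algebra_simps)
  show ?thesis
    unfolding vec_eq_iff forall_3 Zv_nth h
    using ww_rel ww3 by (simp add: field_simps) algebra
qed

lemma Zv_scale: "Zv (a * x) (a * y) = a *s Zv x y"
  by (simp add: vec_eq_iff forall_3 algebra_simps)

lemma Zv_diff: "Zv x y - Zv x' y' = Zv (x-x') (y-y')"
  by (simp add: vec_eq_iff forall_3 algebra_simps)

lemma Zv_lin: "Zv x y = x *s Zv 1 0 + y *s Zv 0 1"
  by (simp add: vec_eq_iff forall_3 algebra_simps)

lemma Zv_0: "Zv 0 0 = 0"
  by (simp add: vec_eq_iff forall_3)

lemma Zv_ne: "Zv 1 0 \<noteq> 0" "Zv 0 1 \<noteq> 0"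
  by (metis Zv_nth(3) add_0 add.right_neutral zero_index zero_neq_one)+

lemma realmult:
  assumes "cmod u = cmod v"
  shows "\<exists>(c::complex) (x::real^3). Zv u v = c *s (\<chi> i. complex_of_real (x $ i))"
proof (cases "u = 0")
  case True
  then have "v = 0" using assms by simp
  then show ?thesis using True by (intro exI[of _ 0]) (simp add: vec_eq_iff Zv_0)
next
  case False
  then have v0: "v \<noteq> 0" using assms by auto
  define c where "c = csqrt (u * v)"
  have cc: "c * c = u * v" unfolding c_def by (metis power2_eq_square power2_csqrt)
  have c0: "c \<noteq> 0" using cc False v0 by auto
  have nc: "cmod c ^ 2 = cmod u ^ 2"
    using cc assms by (metis norm_mult power2_eq_square)
  have "c * cnj c = of_real (cmod c ^ 2)" by (metis complex_norm_square of_real_power)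
  also have "\<dots> = u * cnj u" using nc by (metis complex_norm_square of_real_power)
  finally have cc2: "c * cnj c = u * cnj u" .
  have e: "v * cnj c * c = cnj u * c * c"
  proof -
    have "v * cnj c * c = v * (c * cnj c)" by (simp add: ac_simps)
    also have "\<dots> = v * (u * cnj u)" by (simp add: cc2)
    also have "\<dots> = cnj u * (c * c)" by (simp add: cc ac_simps)
    finally show ?thesis by (simp add: ac_simps)
  qed
  then have e2: "v * cnj c = cnj u * c" using c0 by simp
  have key: "v / c = cnj (u / c)"
    using e2 c0 by (simp add: frac_eq_eq ac_simps)
  define A where "A = u / c"
  have vA: "v / c = cnj A" using key A_def by simp
  have w4: "ww^4 = ww" using ww3 by algebra
  have q1: "Zv u v $ 1 / c = A * ww + cnj (A * ww)"
    using vA by (simp add: A_def add_divide_distrib cnj_ww) (metis times_divide_eq_left)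
  have q2: "Zv u v $ 2 / c = A * ww^2 + cnj (A * ww^2)"
  proof -
    have "cnj (ww^2) = ww" using cnj_ww w4 by (metis complex_cnj_power power_mult numeral_Bit0 mult_2_right semiring_norm(2) numeral_One power_add)
    then show ?thesis
      using vA by (simp add: A_def add_divide_distrib) (metis times_divide_eq_left)
  qed
  have q3: "Zv u v $ 3 / c = A + cnj A"
    using vA by (simp add: A_def add_divide_distrib)
  have re: "Im (Zv u v $ i / c) = 0" for i
  proof -
    have im: "Im (x + cnj x) = 0" for x by simp
    show ?thesis using exhaust_3[of i] by (metis q1 q2 q3 im)
  qed
  have "Zv u v = c *s (\<chi> i. complex_of_real (Re (Zv u v $ i / c)))"
  proof (rule vec_eq_iff[THEN iffD2], intro allI)
    fix i
    have "complex_of_real (Re (Zv u v $ i / c)) = Zv u v $ i / c"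
      using re[of i] by (simp add: complex_eq_iff)
    then show "Zv u v $ i = (c *s (\<chi> i. complex_of_real (Re (Zv u v $ i / c)))) $ i"
      using c0 by simp
  qed
  then show ?thesis by (intro exI[of _ c] exI[of _ "\<chi> i. Re (Zv u v $ i / c)"]) simp
qed



lemma norm_ident: "cmod (a - 2 * b)^2 = cmod (2 * a - b)^2 + 3 * (cmod b ^2 - cmod a ^2)"
  unfolding cmod_power2 by (simp add: power2_eq_square algebra_simps)

definition gg :: "complex \<Rightarrow> complex" where "gg s = (2 - s^3)/(3 * (1 - s^3))"

lemma ff_ratio:
  assumes u0: "u \<noteq> 0" and lt: "cmod v < cmod u"
  shows "ff u v = u * gg (v/u)" "ff v u = v * (1 - gg (v/u))"
proof -
  define s where "s = v / u"
  have v: "v = s * u" using u0 s_def by simp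
  have "cmod s < 1" using lt u0 by (simp add: s_def norm_divide divide_less_eq)
  then have "cmod (s^3) < 1" by (simp add: norm_power power_less_one_iff)
  then have s1: "1 - s^3 \<noteq> 0" by auto
  have u3: "u^3 \<noteq> 0" using u0 by simp
  show "ff u v = u * gg (v/u)"
    unfolding s_def[symmetric] unfolding v ff_def gg_def using s1 u3
    by (simp add: field_simps power_mult_distrib)
  show "ff v u = v * (1 - gg (v/u))"
    unfolding s_def[symmetric] unfolding v ff_swap gg_def using s1 u3
    by (simp add: field_simps power_mult_distrib)
qed

lemma step_lt:
  assumes lt: "cmod v < cmod u"
  shows "cmod (ff v u) < cmod (ff u v)"
proof -
  have u0: "cmod u > 0" using lt norm_ge_zero[of v] by linarith
  have c3: "cmod (v^3) < cmod (u^3)" using lt by (simp add: norm_power power_strict_mono)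
  have "cmod (u^3 - 2 * v^3)^2 < cmod (2 * u^3 - v^3)^2"
    using norm_ident[of "u^3" "v^3"] c3 by (smt (verit) norm_ge_zero power_strict_mono zero_less_numeral zero_less_power)
  then have A: "cmod (u^3 - 2 * v^3) < cmod (2 * u^3 - v^3)"
    by (rule power_less_imp_less_base) simp
  have "cmod (v * (u^3 - 2 * v^3)) \<le> cmod u * cmod (u^3 - 2 * v^3)"
    using lt by (simp add: norm_mult mult_right_mono)
  also have "\<dots> < cmod u * cmod (2 * u^3 - v^3)" using A u0 by simp
  finally have B: "cmod (v * (u^3 - 2 * v^3)) < cmod (u * (2 * u^3 - v^3))" by (simp add: norm_mult)
  have D: "cmod (3 * (u^3 - v^3)) > 0" using cube_ne[of u v] lt by simp
  show ?thesis unfolding ff_swap[of v u] ff_def[of u v] norm_divide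
    using B D by (simp add: divide_strict_right_mono)
qed

lemma contr:
  assumes "cmod s \<le> \<rho>" "\<rho> < 1"
  shows "cmod (s * (1 - 2 * s^3) / (2 - s^3)) ^ 2 \<le> ((2 + \<rho>^2)/3) * cmod s ^ 2"
proof -
  define t where "t = s^3"
  have s1: "cmod s < 1" using assms by simp
  have ts: "cmod t \<le> cmod s"
  proof -
    have "cmod s ^ 2 \<le> 1" using s1 by (simp add: power_le_one)
    then have "cmod s * cmod s ^ 2 \<le> cmod s * 1" by (rule mult_left_mono) simp
    moreover have "cmod t = cmod s * cmod s ^ 2" unfolding t_def norm_power by (simp add: power3_eq_cube power2_eq_square)
    ultimately show ?thesis by simp
  qed
  then have t1: "cmod t < 1" using s1 by simp
  have tr: "cmod t ^ 2 \<le> \<rho> ^ 2" using ts assms by (simp add: power_mono)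
  have d3: "cmod (2 - t) \<le> 3" using norm_triangle_ineq4[of 2 t] t1 by simp
  have "t \<noteq> 2" using t1 by auto
  then have d0: "cmod (2 - t) > 0" by simp
  have id: "cmod (1 - 2 * t)^2 = cmod (2 - t)^2 + 3 * (cmod t ^2 - 1)"
    using norm_ident[of 1 t] by simp
  have "cmod (2 - t)^2 \<le> 9" 
    using power_mono[OF d3 norm_ge_zero, of 2] by simp
  then have "cmod (1 - 2 * t)^2 \<le> cmod (2 - t)^2 * ((2 + cmod t ^ 2)/3)"
  proof -
    assume D9: "cmod (2 - t)^2 \<le> 9"
    define D where "D = cmod (2 - t)^2"
    define x where "x = cmod t ^ 2"
    have x1: "x \<le> 1" unfolding x_def using t1 by (simp add: power_le_one)
    have "0 \<le> (1 - x) * (9 - D)" using x1 D9 unfolding D_def by simp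
    moreover have "D * ((2 + x)/3) - (D + 3 * (x - 1)) = (1 - x) * (9 - D) / 3"
      by (simp add: field_simps)
    ultimately have "D + 3 * (x - 1) \<le> D * ((2 + x)/3)" by linarith
    then show ?thesis unfolding id D_def x_def .
  qed
  also have "\<dots> \<le> cmod (2 - t)^2 * ((2 + \<rho>^2)/3)" using tr by (simp add: mult_left_mono)
  finally have E: "cmod (1 - 2 * t)^2 \<le> cmod (2 - t)^2 * ((2 + \<rho>^2)/3)" .
  have "cmod (s * (1 - 2 * t) / (2 - t)) ^ 2 = cmod s ^ 2 * cmod (1 - 2 * t)^2 / cmod (2 - t)^2"
    by (simp add: norm_mult norm_divide power_mult_distrib power_divide)
  also have "\<dots> \<le> cmod s ^ 2 * (cmod (2 - t)^2 * ((2 + \<rho>^2)/3)) / cmod (2 - t)^2"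
    by (intro divide_right_mono mult_left_mono E) simp_all
  also have "\<dots> = ((2 + \<rho>^2)/3) * cmod s ^ 2" using d0 by simp
  finally show ?thesis unfolding t_def .
qed

lemma N_facts:
  assumes "is_complex_norm N"
  shows "N (c *s x) = cmod c * N x" "N (x + y) \<le> N x + N y" "N x = 0 \<longleftrightarrow> x = 0" "0 \<le> N x"
  using assms unfolding is_complex_norm_def by blast+

lemma N_diff:
  assumes "is_complex_norm N"
  shows "\<bar>N x - N y\<bar> \<le> N (x - y)"
proof -
  have "N x \<le> N (x - y) + N y" using N_facts(2)[OF assms, of "x - y" y] by simp
  moreover have "N y \<le> N (y - x) + N x" using N_facts(2)[OF assms, of "y - x" x] by simp
  moreover have "N (y - x) = N (x - y)"
    using N_facts(1)[OF assms, of "-1" "x - y"] by (simp add: vec_eq_iff)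
  ultimately show ?thesis by linarith
qed

lemma N_cont:
  assumes N: "is_complex_norm N" and a: "a \<longlonglongrightarrow> a0" and b: "b \<longlonglongrightarrow> b0"
  shows "(\<lambda>n. N (a n *s e + b n *s e')) \<longlonglongrightarrow> N (a0 *s e + b0 *s e')"
proof (rule LIM_zero_cancel, rule Lim_null_comparison)
  show "\<forall>\<^sub>F n in sequentially. norm (N (a n *s e + b n *s e') - N (a0 *s e + b0 *s e'))
     \<le> cmod (a n - a0) * N e + cmod (b n - b0) * N e'"
  proof (intro always_eventually allI)
    fix n
    have d: "(a n *s e + b n *s e') - (a0 *s e + b0 *s e') = (a n - a0) *s e + (b n - b0) *s e'"
      by (simp add: vec_eq_iff algebra_simps)
    have "norm (N (a n *s e + b n *s e') - N (a0 *s e + b0 *s e')) \<le> N ((a n - a0) *s e + (b n - b0) *s e')"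
      using N_diff[OF N] d by (metis real_norm_def)
    also have "\<dots> \<le> N ((a n - a0) *s e) + N ((b n - b0) *s e')"
      by (rule N_facts(2)[OF N])
    also have "\<dots> = cmod (a n - a0) * N e + cmod (b n - b0) * N e'"
      by (simp only: N_facts(1)[OF N])
    finally show "norm (N (a n *s e + b n *s e') - N (a0 *s e + b0 *s e')) \<le> cmod (a n - a0) * N e + cmod (b n - b0) * N e'" .
  qed
  have "(\<lambda>n. cmod (a n - a0) * N e + cmod (b n - b0) * N e') \<longlonglongrightarrow> cmod (a0 - a0) * N e + cmod (b0 - b0) * N e'"
    by (rule tendsto_add[OF tendsto_mult[OF tendsto_norm[OF tendsto_diff[OF a tendsto_const]] tendsto_const] tendsto_mult[OF tendsto_norm[OF tendsto_diff[OF b tendsto_const]] tendsto_const]])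
  then show "(\<lambda>n. cmod (a n - a0) * N e + cmod (b n - b0) * N e') \<longlonglongrightarrow> 0" by simp
qed

context
  fixes U V :: "nat \<Rightarrow> complex"
  assumes recU: "\<And>n. U (Suc n) = ff (U n) (V n)" and recV: "\<And>n. V (Suc n) = ff (V n) (U n)"
    and start: "cmod (V 0) < cmod (U 0)"
begin

lemma dinv: "cmod (V n) < cmod (U n)"
  by (induction n) (use start step_lt recU recV in auto)

lemma dU0: "U n \<noteq> 0"
  using dinv[of n] norm_ge_zero[of "V n"] by auto

lemma ds1: "cmod (V n / U n) < 1"
  using dinv[of n] dU0[of n] by (simp add: norm_divide divide_less_eq)

lemma dstep: "U (Suc n) = U n * gg (V n / U n)" "V (Suc n) = V n * (1 - gg (V n / U n))"
  using ff_ratio[OF dU0 dinv] recU recV by simp_all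

lemma gg_frac:
  assumes "cmod s < 1"
  shows "(1 - gg s) / gg s = (1 - 2 * s^3) / (2 - s^3)"
proof -
  have "cmod (s^3) < 1" using assms by (simp add: norm_power power_less_one_iff)
  then have s1: "1 - s^3 \<noteq> 0" and s2: "2 - s^3 \<noteq> 0" by auto
  have s3: "3 * (1 - s^3) \<noteq> 0" using s1 by simp
  have h1: "1 - gg s = (1 - 2 * s^3) / (3 * (1 - s^3))" unfolding gg_def using s3
    by (simp add: diff_divide_distrib[symmetric] divide_simps)
  have h2: "gg s = (2 - s^3) / (3 * (1 - s^3))" unfolding gg_def ..
  show ?thesis
    apply (subst h1)
    apply (subst h2)
    using s1 s2 by simp
qed

lemma dsrec: "V (Suc n) / U (Suc n) = (V n / U n) * (1 - 2 * (V n / U n)^3) / (2 - (V n / U n)^3)"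
proof -
  have "gg (V n / U n) \<noteq> 0"
  proof
    assume "gg (V n / U n) = 0"
    then have "U (Suc n) = 0" using dstep by simp
    then show False using dU0 by blast
  qed
  then have "V (Suc n) / U (Suc n) = (V n / U n) * ((1 - gg (V n / U n)) / gg (V n / U n))"
    unfolding dstep using dU0[of n] by (simp add: field_simps)
  then show ?thesis unfolding gg_frac[OF ds1] by simp
qed

lemma dsbound: "cmod (V n / U n) ^ 2 \<le> ((2 + cmod (V 0 / U 0)^2)/3) ^ n * cmod (V 0 / U 0) ^ 2"
proof (induction n)
  case 0 then show ?case by simp
next
  case (Suc n)
  define \<rho> where "\<rho> = cmod (V 0 / U 0)"
  define q where "q = (2 + \<rho>^2)/3"
  have \<rho>1: "\<rho> < 1" using ds1[of 0] \<rho>_def by simp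
  have \<rho>0: "0 \<le> \<rho>" unfolding \<rho>_def by simp
  have q0: "0 \<le> q" "q \<le> 1" using \<rho>1 \<rho>0 unfolding q_def by (simp_all add: power_le_one)
  note IH = Suc.IH[folded \<rho>_def, folded q_def]
  have "q^n * \<rho>^2 \<le> \<rho>^2" using q0 by (intro mult_left_le_one_le) (simp_all add: power_le_one)
  with IH have "cmod (V n / U n)^2 \<le> \<rho>^2" by (rule order_trans)
  then have "cmod (V n / U n) \<le> \<rho>" using \<rho>0 by (rule power2_le_imp_le)
  then have "cmod (V (Suc n) / U (Suc n))^2 \<le> q * cmod (V n / U n)^2"
    unfolding dsrec q_def by (rule contr[OF _ \<rho>1])
  also have "\<dots> \<le> q * (q^n * \<rho>^2)" using IH q0 by (simp add: mult_left_mono)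
  finally show ?case unfolding q_def \<rho>_def by (simp add: ac_simps)
qed

lemma ds_lim: "(\<lambda>n. V n / U n) \<longlonglongrightarrow> 0"
proof -
  define \<rho> where "\<rho> = cmod (V 0 / U 0)"
  define q where "q = (2 + \<rho>^2)/3"
  have \<rho>1: "\<rho> < 1" using ds1[of 0] \<rho>_def by simp
  have \<rho>0: "0 \<le> \<rho>" unfolding \<rho>_def by simp
  have "\<rho>^2 < 1" using \<rho>1 \<rho>0 by (simp add: abs_square_less_1)
  then have q0: "0 \<le> q" "q < 1" unfolding q_def by simp_all
  have b: "cmod (V n / U n) \<le> sqrt q ^ n * \<rho>" for n
  proof -
    have "cmod (V n / U n)^2 \<le> q ^ n * \<rho> ^ 2" using dsbound[of n] unfolding q_def \<rho>_def .
    then have "cmod (V n / U n) \<le> sqrt (q ^ n * \<rho> ^ 2)"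
      by (rule real_le_rsqrt)
    also have "sqrt (q ^ n * \<rho> ^ 2) = sqrt q ^ n * \<rho>" using \<rho>0 by (simp add: real_sqrt_mult real_sqrt_power)
    finally show ?thesis .
  qed
  have sq1: "sqrt q < 1" using q0(2) by simp
  have sq0: "0 \<le> sqrt q" using q0(1) by simp
  have "norm (sqrt q) < 1" using sq1 sq0 by simp
  then have "(\<lambda>n. sqrt q ^ n) \<longlonglongrightarrow> 0" by (rule LIMSEQ_power_zero)
  then have "(\<lambda>n. sqrt q ^ n * \<rho>) \<longlonglongrightarrow> 0" by (rule tendsto_mult_left_zero)
  moreover have "\<forall>\<^sub>F n in sequentially. norm (V n / U n) \<le> sqrt q ^ n * \<rho>"
    using b by (intro always_eventually allI) simp
  ultimately show ?thesis by (rule Lim_null_comparison[rotated])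
qed

lemma dg_lim: "(\<lambda>n. gg (V n / U n)) \<longlonglongrightarrow> 2/3"
proof -
  have p: "(\<lambda>n. (V n / U n)^3) \<longlonglongrightarrow> 0" using tendsto_power[OF ds_lim, of 3] by simp
  have n: "(\<lambda>n. 2 - (V n / U n)^3) \<longlonglongrightarrow> 2 - 0" by (rule tendsto_diff[OF tendsto_const p])
  have d: "(\<lambda>n. 3 * (1 - (V n / U n)^3)) \<longlonglongrightarrow> 3 * (1 - 0)"
    by (rule tendsto_mult[OF tendsto_const tendsto_diff[OF tendsto_const p]])
  have "(\<lambda>n. (2 - (V n / U n)^3) / (3 * (1 - (V n / U n)^3))) \<longlonglongrightarrow> (2 - 0) / (3 * (1 - 0))"
    by (rule tendsto_divide[OF n d]) simp
  then show ?thesis unfolding gg_def by simp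
qed

lemma dU_lim: "U \<longlonglongrightarrow> 0"
proof -
  have "(\<lambda>n. cmod (gg (V n / U n))) \<longlonglongrightarrow> cmod (2/3 :: complex)"
    by (rule tendsto_norm[OF dg_lim])
  then have "(\<lambda>n. cmod (gg (V n / U n))) \<longlonglongrightarrow> 2/3" by simp
  then have "\<forall>\<^sub>F n in sequentially. cmod (gg (V n / U n)) < 5/6"
    by (rule order_tendstoD) simp
  then obtain M where M: "\<And>n. n \<ge> M \<Longrightarrow> cmod (gg (V n / U n)) < 5/6"
    unfolding eventually_sequentially by blast
  have "summable U"
  proof (rule summable_ratio_test[of "5/6" M])
    fix n assume "n \<ge> M"
    then have "cmod (U n) * cmod (gg (V n / U n)) \<le> cmod (U n) * (5/6)"
      using M[of n] by (intro mult_left_mono) simp_all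
    then show "norm (U (Suc n)) \<le> 5/6 * norm (U n)"
      unfolding dstep by (simp add: norm_mult ac_simps)
  qed simp
  then show ?thesis by (rule summable_LIMSEQ_zero)
qed

lemma dV_lim: "V \<longlonglongrightarrow> 0"
proof -
  have "(\<lambda>n. (V n / U n) * U n) \<longlonglongrightarrow> 0 * 0" by (rule tendsto_mult[OF ds_lim dU_lim])
  moreover have "(V n / U n) * U n = V n" for n using dU0[of n] by simp
  ultimately show ?thesis by simp
qed

lemma dratio:
  assumes N: "is_complex_norm N" and e: "e \<noteq> 0"
  shows "(\<lambda>n. N (U (Suc n) *s e + V (Suc n) *s e') / N (U n *s e + V n *s e')) \<longlonglongrightarrow> 2/3"
proof -
  define s where "s n = V n / U n" for n
  define g where "g n = gg (s n)" for n
  have eq: "N (U (Suc n) *s e + V (Suc n) *s e') / N (U n *s e + V n *s e')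
     = N (g n *s e + (s n * (1 - g n)) *s e') / N (1 *s e + s n *s e')" for n
  proof -
    have a: "U (Suc n) *s e + V (Suc n) *s e' = U n *s (g n *s e + (s n * (1 - g n)) *s e')"
      unfolding dstep g_def s_def using dU0[of n] by (simp add: vec_eq_iff algebra_simps)
    have b: "U n *s e + V n *s e' = U n *s (1 *s e + s n *s e')"
      unfolding s_def using dU0[of n] by (simp add: vec_eq_iff algebra_simps)
    have "cmod (U n) \<noteq> 0" using dU0 by simp
    then show ?thesis unfolding a b N_facts(1)[OF N] by simp
  qed
  have sl: "s \<longlonglongrightarrow> 0" unfolding s_def by (rule ds_lim)
  have gl: "g \<longlonglongrightarrow> 2/3" unfolding g_def s_def by (rule dg_lim)
  have l1: "(\<lambda>n. N (g n *s e + (s n * (1 - g n)) *s e')) \<longlonglongrightarrow> N ((2/3) *s e + (0 * (1 - 2/3)) *s e')"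
    by (rule N_cont[OF N gl tendsto_mult[OF sl tendsto_diff[OF tendsto_const gl]]])
  have l2: "(\<lambda>n. N (1 *s e + s n *s e')) \<longlonglongrightarrow> N (1 *s e + 0 *s e')"
    by (rule N_cont[OF N tendsto_const sl])
  have Ne: "N e \<noteq> 0" using N_facts(3)[OF N] e by simp
  have v1: "N ((2/3) *s e + (0 * (1 - 2/3)) *s e') = 2/3 * N e"
    using N_facts(1)[OF N, of "2/3" e] by (simp add: vec_eq_iff)
  have v2: "N (1 *s e + 0 *s e') = N e"
    by (simp add: vec_eq_iff)
  have "(\<lambda>n. N (g n *s e + (s n * (1 - g n)) *s e') / N (1 *s e + s n *s e')) \<longlonglongrightarrow> (2/3 * N e) / N e"
    using tendsto_divide[OF l1 l2] Ne unfolding v1 v2 by simp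
  then show ?thesis unfolding eq using Ne by simp
qed

end



lemma Zv_comp: "Zv a b $ i = a * Zv 1 0 $ i + b * Zv 0 1 $ i"
  by (subst Zv_lin) simp

theorem theorem3p8:
  fixes z :: "complex ^ 3"
  assumes "z $ 1 + z $ 2 + z $ 3 = 0"
    and "\<not> (\<exists>(c::complex) (v::real ^ 3). z = c *s (\<chi> i. complex_of_real (v $ i)))"
  shows "(\<forall>n. (weierstrass_map [:0, 0, 0, 1:] ^^ n) z \<notin> diag_set)
    \<and> ((\<lambda>n. (weierstrass_map [:0, 0, 0, 1:] ^^ n) z) \<longlonglongrightarrow> 0)
    \<and> (\<forall>n. (weierstrass_map [:0, 0, 0, 1:] ^^ n) z \<noteq> 0)
    \<and> (\<forall>N :: complex ^ 3 \<Rightarrow> real. is_complex_norm N \<longrightarrow>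
         (\<lambda>n. N ((weierstrass_map [:0, 0, 0, 1:] ^^ Suc n) z)
              / N ((weierstrass_map [:0, 0, 0, 1:] ^^ n) z)) \<longlonglongrightarrow> 2 / 3)"
proof -
  define u where "u = (z$1 * ww^2 + z$2 * ww + z$3)/3"
  define v where "v = (z$1 * ww + z$2 * ww^2 + z$3)/3"
  have z: "z = Zv u v" unfolding u_def v_def by (rule Zv_repr[OF assms(1)])
  have ne: "cmod u \<noteq> cmod v"
  proof
    assume "cmod u = cmod v"
    from realmult[OF this] assms(2) show False unfolding z by blast
  qed
  define FF where "FF = (\<lambda>p. (ff (fst p) (snd p), ff (snd p) (fst p)))"
  define S where "S n = (FF ^^ n) (u, v)" for n
  define U where "U n = fst (S n)" for n
  define V where "V n = snd (S n)" for n
  have recU: "U (Suc n) = ff (U n) (V n)" for n unfolding U_def V_def S_def by (simp add: FF_def)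
  have recV: "V (Suc n) = ff (V n) (U n)" for n unfolding U_def V_def S_def by (simp add: FF_def)
  have U0: "U 0 = u" and V0: "V 0 = v" unfolding U_def V_def S_def by simp_all
  have facts: "(\<forall>n. cmod (U n) \<noteq> cmod (V n)) \<and> U \<longlonglongrightarrow> 0 \<and> V \<longlonglongrightarrow> 0 \<and>
     (\<forall>N. is_complex_norm N \<longrightarrow>
       (\<lambda>n. N (Zv (U (Suc n)) (V (Suc n))) / N (Zv (U n) (V n))) \<longlonglongrightarrow> 2/3)"
  proof (cases "cmod v < cmod u")
    case True
    then have st: "cmod (V 0) < cmod (U 0)" using U0 V0 by simp
    have "\<forall>n. cmod (U n) \<noteq> cmod (V n)" using dinv[OF recU recV st] by (metis less_irrefl)
    moreover have "U \<longlonglongrightarrow> 0" by (rule dU_lim[OF recU recV st])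
    moreover have "V \<longlonglongrightarrow> 0" by (rule dV_lim[OF recU recV st])
    moreover have "\<forall>N. is_complex_norm N \<longrightarrow>
       (\<lambda>n. N (Zv (U (Suc n)) (V (Suc n))) / N (Zv (U n) (V n))) \<longlonglongrightarrow> 2/3"
    proof (intro allI impI)
      fix N :: "complex^3 \<Rightarrow> real" assume N: "is_complex_norm N"
      show "(\<lambda>n. N (Zv (U (Suc n)) (V (Suc n))) / N (Zv (U n) (V n))) \<longlonglongrightarrow> 2/3"
        using dratio[OF recU recV st N Zv_ne(1), of "Zv 0 1"] unfolding Zv_lin[symmetric] .
    qed
    ultimately show ?thesis by blast
  next
    case False
    then have st: "cmod (U 0) < cmod (V 0)" using U0 V0 ne by simp
    have "\<forall>n. cmod (U n) \<noteq> cmod (V n)" using dinv[OF recV recU st] by (metis less_irrefl)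
    moreover have "V \<longlonglongrightarrow> 0" by (rule dU_lim[OF recV recU st])
    moreover have "U \<longlonglongrightarrow> 0" by (rule dV_lim[OF recV recU st])
    moreover have "\<forall>N. is_complex_norm N \<longrightarrow>
       (\<lambda>n. N (Zv (U (Suc n)) (V (Suc n))) / N (Zv (U n) (V n))) \<longlonglongrightarrow> 2/3"
    proof (intro allI impI)
      fix N :: "complex^3 \<Rightarrow> real" assume N: "is_complex_norm N"
      have c: "Zv a b = b *s Zv 0 1 + a *s Zv 1 0" for a b
        by (simp add: vec_eq_iff forall_3 algebra_simps)
      show "(\<lambda>n. N (Zv (U (Suc n)) (V (Suc n))) / N (Zv (U n) (V n))) \<longlonglongrightarrow> 2/3"
        using dratio[OF recV recU st N Zv_ne(2), of "Zv 1 0"] unfolding c[symmetric] .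
    qed
    ultimately show ?thesis by blast
  qed
  have nen: "cmod (U n) \<noteq> cmod (V n)" for n using facts by blast
  have hU: "U \<longlonglongrightarrow> 0" and hV: "V \<longlonglongrightarrow> 0" using facts by blast+
  have hR: "\<And>N. is_complex_norm N \<Longrightarrow>
       (\<lambda>n. N (Zv (U (Suc n)) (V (Suc n))) / N (Zv (U n) (V n))) \<longlonglongrightarrow> 2/3" using facts by blast
  have it: "(weierstrass_map [:0, 0, 0, 1:] ^^ n) z = Zv (U n) (V n)" for n
  proof (induction n)
    case 0 then show ?case using z U0 V0 by simp
  next
    case (Suc n)
    have "U n ^ 3 \<noteq> V n ^ 3" by (rule cube_ne[OF nen])
    then show ?case using Suc by (simp add: W_Zv recU recV)
  qed
  have nd: "Zv (U n) (V n) \<notin> diag_set" for n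
    by (rule nondiag[OF cube_ne[OF nen]])
  have nz: "Zv (U n) (V n) \<noteq> 0" for n
  proof
    assume "Zv (U n) (V n) = 0"
    then have "Zv (U n) (V n) $ 1 = Zv (U n) (V n) $ 2" by simp
    moreover have "(1::3) \<noteq> 2" by simp
    ultimately have "Zv (U n) (V n) \<in> diag_set" unfolding diag_set_def by blast
    then show False using nd by blast
  qed
  have lim: "(\<lambda>n. Zv (U n) (V n)) \<longlonglongrightarrow> 0"
  proof (rule vec_tendstoI)
    fix i
    have "(\<lambda>n. U n * Zv 1 0 $ i + V n * Zv 0 1 $ i) \<longlonglongrightarrow> 0 * Zv 1 0 $ i + 0 * Zv 0 1 $ i"
      by (rule tendsto_add[OF tendsto_mult[OF hU tendsto_const] tendsto_mult[OF hV tendsto_const]])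
    then show "(\<lambda>n. Zv (U n) (V n) $ i) \<longlonglongrightarrow> 0 $ i" unfolding Zv_comp[of "U _" "V _"] by simp
  qed
  show ?thesis unfolding it using nd nz lim hR by blast
qed

end
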